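(* For every integer $n>0$, the diffeological space $\mathbb{TD}^n$ is not reflexive: there is a parametrization $f:(-1,1)\to\mathbb{TD}^n$ such that $g\circ f$ is smooth for every smooth function $g:\mathbb{TD}^n\to\mathbb{R}$, but $f$ is not a plot of $\mathbb{TD}^n$.
   Context: Define $\pi^n_{set}:\mathbb{R}^n\to\mathbb{R}^n$ by $\pi^n_{set}(v)=v$ if $\|v\|\le1$ and $\pi^n_{set}(v)=v/\|v\|$ if $\|v\|\ge1$. Let $\mathbb{TD}^n=\mathbb{R}^n/\!\sim$, where $v\sim w$ iff $\pi^n_{set}(v)=\pi^n_{set}(w)$, equipped with the quotient diffeology from $\mathbb{R}^n$ (so the projection $\pi_n:\mathbb{R}^n\to\mathbb{TD}^n$ is a subduction). A parametrization is a map from an open subset of a Euclidean space; a diffeological space is reflexive if every parametrization $P$ such that $g\circ P$ is smooth for all smooth $g$ into $\mathbb{R}$ is a plot. *)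

theory Defs
  imports "HOL-Analysis.Analysis"
begin

fun Ck_on :: "nat \<Rightarrow> 'a::euclidean_space set \<Rightarrow> ('a \<Rightarrow> 'b::real_normed_vector) \<Rightarrow> bool" where
  "Ck_on 0 U f = continuous_on U f"
| "Ck_on (Suc k) U f =
     (\<exists>f'. (\<forall>x\<in>U. (f has_derivative f' x) (at x)) \<and>
           (\<forall>i\<in>Basis. Ck_on k U (\<lambda>x. f' x i)))"

definition smooth_on :: "'a::euclidean_space set \<Rightarrow> ('a \<Rightarrow> 'b::real_normed_vector) \<Rightarrow> bool" where
  "smooth_on U f \<longleftrightarrow> (\<forall>k. Ck_on k U f)"

definition pi_set :: "real^'n \<Rightarrow> real^'n" where
  "pi_set v = (if norm v \<le> 1 then v else v /\<^sub>R norm v)"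

definition TD_proj :: "real^'n \<Rightarrow> (real^'n) set" where
  "TD_proj v = {w. pi_set w = pi_set v}"

definition TD_space :: "((real^'n) set) set" where
  "TD_space = range TD_proj"

definition TD_plot :: "'a::euclidean_space set \<Rightarrow> ('a \<Rightarrow> (real^'n) set) \<Rightarrow> bool" where
  "TD_plot U P \<longleftrightarrow> open U \<and> (\<forall>x\<in>U. P x \<in> TD_space) \<and>
     (\<forall>x\<in>U. \<exists>V (Q :: 'a \<Rightarrow> real^'n). open V \<and> x \<in> V \<and> V \<subseteq> U \<and> smooth_on V Q \<and>
        (\<forall>y\<in>V. TD_proj (Q y) = P y))"

text \<open>Smooth real functions on TD^n: since the projection is a subduction,
  g is smooth iff g composed with the projection is smooth on R^n.\<close>

definition TD_smooth_fun :: "((real^'n) set \<Rightarrow> real) \<Rightarrow> bool" where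
  "TD_smooth_fun g \<longleftrightarrow> smooth_on (UNIV :: (real^'n) set) (\<lambda>v. g (TD_proj v))"

end

theory Submission imports Defs begin

lemma Ck_const: "Ck_on k U (\<lambda>x. c)"
proof (induction k arbitrary: c)
  case 0 then show ?case by simp
next
  case (Suc k)
  show ?case
    by (rule Ck_on.simps(2)[THEN iffD2], rule exI[of _ "\<lambda>x. \<lambda>h. 0"]) (auto simp: Suc)
qed

lemma Ck_add: "Ck_on k U f \<Longrightarrow> Ck_on k U g \<Longrightarrow> Ck_on k U (\<lambda>x. f x + g x)"
proof (induction k arbitrary: f g)
  case 0 then show ?case by (simp add: continuous_on_add)
next
  case (Suc k)
  from Suc.prems obtain f' g' where f': "\<forall>x\<in>U. (f has_derivative f' x) (at x)" "\<forall>i\<in>Basis. Ck_on k U (\<lambda>x. f' x i)"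
    and g': "\<forall>x\<in>U. (g has_derivative g' x) (at x)" "\<forall>i\<in>Basis. Ck_on k U (\<lambda>x. g' x i)" by auto
  show ?case
    by (rule Ck_on.simps(2)[THEN iffD2], rule exI[of _ "\<lambda>x h. f' x h + g' x h"])
      (auto intro!: has_derivative_add Suc.IH simp: f' g')
qed

lemma Ck_scale: "Ck_on k U f \<Longrightarrow> Ck_on k U (\<lambda>x. c *\<^sub>R f x)"
proof (induction k arbitrary: f)
  case 0 then show ?case by (simp add: continuous_on_scaleR)
next
  case (Suc k)
  from Suc.prems obtain f' where f': "\<forall>x\<in>U. (f has_derivative f' x) (at x)" "\<forall>i\<in>Basis. Ck_on k U (\<lambda>x. f' x i)"
    by auto
  show ?case
    by (rule Ck_on.simps(2)[THEN iffD2], rule exI[of _ "\<lambda>x h. c *\<^sub>R f' x h"])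
      (auto intro!: has_derivative_scaleR_right Suc.IH simp: f')
qed

lemma Ck_sum: "finite S \<Longrightarrow> (\<And>i. i \<in> S \<Longrightarrow> Ck_on k U (f i)) \<Longrightarrow> Ck_on k U (\<lambda>x. \<Sum>i\<in>S. f i x)"
  by (induction S rule: finite_induct) (auto intro: Ck_const Ck_add)

lemma Ck_affine:
  fixes h :: "'a::euclidean_space \<Rightarrow> 'b::real_normed_vector"
  shows "Ck_on k UNIV h \<Longrightarrow> Ck_on k (U::real set) (\<lambda>t. h (a + t *\<^sub>R b))"
proof (induction k arbitrary: h)
  case 0
  have "continuous_on U (\<lambda>t. a + t *\<^sub>R b)" by (intro continuous_intros)
  then show ?case using 0 by (auto intro: continuous_on_compose2[of UNIV h])
next
  case (Suc k)
  from Suc.prems obtain h' where h': "\<And>x. (h has_derivative h' x) (at x)" "\<And>i. i\<in>Basis \<Longrightarrow> Ck_on k UNIV (\<lambda>x. h' x i)"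
    by auto
  have lin: "linear (h' x)" for x using h'(1) has_derivative_linear by blast
  have eq: "(\<lambda>t. h' (a + t *\<^sub>R b) b) = (\<lambda>t. \<Sum>i\<in>Basis. (b \<bullet> i) *\<^sub>R h' (a + t *\<^sub>R b) i)"
  proof
    fix t
    have "h' (a + t *\<^sub>R b) b = h' (a + t *\<^sub>R b) (\<Sum>i\<in>Basis. (b \<bullet> i) *\<^sub>R i)"
      by (simp add: euclidean_representation)
    also have "\<dots> = (\<Sum>i\<in>Basis. (b \<bullet> i) *\<^sub>R h' (a + t *\<^sub>R b) i)"
      using lin[of "a + t *\<^sub>R b"] by (simp add: linear_sum linear_scale)
    finally show "h' (a + t *\<^sub>R b) b = (\<Sum>i\<in>Basis. (b \<bullet> i) *\<^sub>R h' (a + t *\<^sub>R b) i)" .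
  qed
  have der: "((\<lambda>t. h (a + t *\<^sub>R b)) has_derivative (\<lambda>s. h' (a + t *\<^sub>R b) (s *\<^sub>R b))) (at t)" for t
  proof -
    have "((\<lambda>t. a + t *\<^sub>R b) has_derivative (\<lambda>s. s *\<^sub>R b)) (at t)"
      by (auto intro!: derivative_eq_intros)
    from has_derivative_compose[OF this h'(1)] show ?thesis by (simp add: o_def)
  qed
  show ?case
    apply (rule Ck_on.simps(2)[THEN iffD2], rule exI[of _ "\<lambda>t s. h' (a + t *\<^sub>R b) (s *\<^sub>R b)"])
    apply (auto simp: der eq intro!: Ck_sum Ck_scale Suc.IH h'(2))
    done
qed


lemma pi_set_small: "norm v \<le> 1 \<Longrightarrow> pi_set v = v"
  by (simp add: pi_set_def)

lemma key:
  fixes e :: "real^'n"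
  assumes "norm e = 1" "t \<ge> 0"
  shows "TD_proj ((1 + t) *\<^sub>R e) = TD_proj e"
proof -
  have "pi_set ((1 + t) *\<^sub>R e) = e"
  proof (cases "t = 0")
    case True then show ?thesis using assms by (simp add: pi_set_def)
  next
    case False
    then have "norm ((1 + t) *\<^sub>R e) = 1 + t" using assms by simp
    then show ?thesis using False assms by (simp add: pi_set_def)
  qed
  moreover have "pi_set e = e" using assms by (simp add: pi_set_def)
  ultimately show ?thesis unfolding TD_proj_def by simp
qed

lemma abs_not_deriv: "\<not> ((\<lambda>y::real. 1 - \<bar>y\<bar>) has_field_derivative D) (at 0)"
proof
  assume "((\<lambda>y::real. 1 - \<bar>y\<bar>) has_field_derivative D) (at 0)"
  then have L: "((\<lambda>h. ((1 - \<bar>0 + h\<bar>) - (1 - \<bar>0::real\<bar>)) / h) \<longlongrightarrow> D) (at 0)"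
    by (simp only: DERIV_def)
  define F where "F = (\<lambda>h. ((1 - \<bar>0 + h\<bar>) - (1 - \<bar>0::real\<bar>)) / h)"
  have Fp: "F h = -1" if "h > 0" for h using that by (simp add: F_def)
  have Fn: "F h = 1" if "h < 0" for h using that by (simp add: F_def)
  have LF: "(F \<longlongrightarrow> D) (at 0)" using L unfolding F_def .
  have R: "(F \<longlongrightarrow> D) (at_right 0)" by (rule tendsto_mono[OF at_within_le_at LF])
  have Le: "(F \<longlongrightarrow> D) (at_left 0)" by (rule tendsto_mono[OF at_within_le_at LF])
  have e1: "eventually (\<lambda>h. F h = -1) (at_right 0)"
    unfolding eventually_at_filter by (rule always_eventually) (simp add: Fp)
  have e2: "eventually (\<lambda>h. F h = 1) (at_left 0)"
    unfolding eventually_at_filter by (rule always_eventually) (simp add: Fn)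
  have "((\<lambda>h::real. -1::real) \<longlongrightarrow> D) (at_right 0)"
    using R tendsto_cong[OF e1] by blast
  then have 1: "D = -1"
    using tendsto_unique[OF trivial_limit_at_right_real tendsto_const] by blast
  have "((\<lambda>h::real. 1::real) \<longlongrightarrow> D) (at_left 0)"
    using Le tendsto_cong[OF e2] by blast
  then have "D = 1"
    using tendsto_unique[OF trivial_limit_at_left_real tendsto_const] by blast
  with 1 show False by simp
qed

theorem proposition8p3:
  shows "\<exists>f :: real \<Rightarrow> (real^'n) set.
           (\<forall>t\<in>{-1<..<1}. f t \<in> TD_space) \<and>
           (\<forall>g. TD_smooth_fun g \<longrightarrow> smooth_on {-1<..<1} (g \<circ> f)) \<and>
           \<not> TD_plot {-1<..<1} f"
proof -
  define e :: "real^'n" where "e = axis undefined 1"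
  have ne: "norm e = 1" by (simp add: e_def)
  define f where "f t = TD_proj ((1 - \<bar>t\<bar>) *\<^sub>R e)" for t :: real
  have A: "\<forall>t\<in>{-1<..<1}. f t \<in> TD_space" by (simp add: f_def TD_space_def)
  have B: "smooth_on {-1<..<1} (g \<circ> f)" if "TD_smooth_fun g" for g
  proof -
    define h where "h = (\<lambda>v :: real^'n. g (TD_proj v))"
    have hs: "\<And>k. Ck_on k UNIV h" using that by (simp add: TD_smooth_fun_def smooth_on_def h_def)
    have eq: "g \<circ> f = (\<lambda>t. (h (e + t *\<^sub>R (-e)) + h (e + t *\<^sub>R e)) + (-1) *\<^sub>R h (e + 0 *\<^sub>R e))"
    proof
      fix t :: real
      show "(g \<circ> f) t = (h (e + t *\<^sub>R (-e)) + h (e + t *\<^sub>R e)) + (-1) *\<^sub>R h (e + 0 *\<^sub>R e)"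
      proof (cases "t \<ge> 0")
        case True
        have "h (e + t *\<^sub>R e) = h e" using key[OF ne True] by (simp add: h_def algebra_simps)
        moreover have "(1 - \<bar>t\<bar>) *\<^sub>R e = e + t *\<^sub>R (-e)" using True by (simp add: algebra_simps)
        ultimately show ?thesis by (simp add: f_def h_def)
      next
        case False
        then have "-t \<ge> 0" by simp
        have "h (e + t *\<^sub>R (-e)) = h e" using key[OF ne \<open>-t \<ge> 0\<close>] by (simp add: h_def algebra_simps)
        moreover have "(1 - \<bar>t\<bar>) *\<^sub>R e = e + t *\<^sub>R e" using False by (simp add: algebra_simps)
        ultimately show ?thesis by (simp add: f_def h_def)
      qed
    qed
    show ?thesis unfolding smooth_on_def eq
    proof (intro allI)
      fix k
      show "Ck_on k {-1<..<1} (\<lambda>t. (h (e + t *\<^sub>R (-e)) + h (e + t *\<^sub>R e)) + (-1) *\<^sub>R h (e + 0 *\<^sub>R e))"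
        by (rule Ck_add[OF Ck_add Ck_const]) (rule Ck_affine[OF hs])+
    qed
  qed
  have C: "\<not> TD_plot {-1<..<1} f"
  proof
    assume "TD_plot {-1<..<1} f"
    then obtain V and Q :: "real \<Rightarrow> real^'n" where V: "open V" "0 \<in> V" "V \<subseteq> {-1<..<1}" "smooth_on V Q"
      "\<And>y. y \<in> V \<Longrightarrow> TD_proj (Q y) = f y"
    proof -
      have m: "(0::real) \<in> {-1<..<1}" by simp
      have all: "\<forall>x\<in>{-1<..<1::real}. \<exists>V (Q :: real \<Rightarrow> real^'n). open V \<and> x \<in> V \<and> V \<subseteq> {-1<..<1} \<and> smooth_on V Q \<and>
        (\<forall>y\<in>V. TD_proj (Q y) = f y)"
        using \<open>TD_plot {-1<..<1} f\<close> unfolding TD_plot_def by (elim conjE)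
      from bspec[OF all m] have "\<exists>V (Q :: real \<Rightarrow> real^'n). open V \<and> 0 \<in> V \<and> V \<subseteq> {-1<..<1} \<and> smooth_on V Q \<and>
        (\<forall>y\<in>V. TD_proj (Q y) = f y)" by simp
      then obtain V where "\<exists>Q :: real \<Rightarrow> real^'n. open V \<and> 0 \<in> V \<and> V \<subseteq> {-1<..<1} \<and> smooth_on V Q \<and>
        (\<forall>y\<in>V. TD_proj (Q y) = f y)" ..
      then obtain Q :: "real \<Rightarrow> real^'n" where "open V \<and> 0 \<in> V \<and> V \<subseteq> {-1<..<1} \<and> smooth_on V Q \<and>
        (\<forall>y\<in>V. TD_proj (Q y) = f y)" ..
      then show ?thesis using that by (elim conjE) simp
    qed
    from V(4) have "Ck_on 1 V Q" by (simp add: smooth_on_def)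
    then obtain Q' where Q': "(Q has_derivative Q') (at 0)" using V(2) by auto
    have Qy: "Q y = (1 - \<bar>y\<bar>) *\<^sub>R e" if "y \<in> V" "y \<noteq> 0" for y
    proof -
      have y1: "\<bar>y\<bar> < 1" using that V(3) by (auto simp: subset_iff abs_less_iff)
      let ?w = "(1 - \<bar>y\<bar>) *\<^sub>R e"
      have nw: "norm ?w = 1 - \<bar>y\<bar>" using ne y1 by simp
      have "Q y \<in> TD_proj (Q y)" by (simp add: TD_proj_def)
      moreover have "TD_proj (Q y) = TD_proj ?w" using V(5)[OF that(1)] by (simp add: f_def)
      ultimately have "Q y \<in> TD_proj ?w" by simp
      then have "pi_set (Q y) = pi_set ?w" unfolding TD_proj_def by simp
      also have "\<dots> = ?w" using nw y1 by (simp add: pi_set_def)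
      finally have pq: "pi_set (Q y) = ?w" .
      show ?thesis
      proof (cases "norm (Q y) \<le> 1")
        case True then show ?thesis using pq by (simp add: pi_set_def)
      next
        case False
        then have "norm (Q y) \<noteq> 0" by auto
        then have "norm (pi_set (Q y)) = 1" using False by (simp add: pi_set_def)
        then show ?thesis using pq nw that(2) by simp
      qed
    qed
    define c where "c y = Q y \<bullet> e" for y
    have cd: "(c has_derivative (\<lambda>s. Q' s \<bullet> e)) (at 0)"
      unfolding c_def by (rule has_derivative_inner_left[OF Q'])
    have cy: "c y = 1 - \<bar>y\<bar>" if "y \<in> V" "y \<noteq> 0" for y
      using Qy[OF that] ne by (simp add: c_def inner_commute dot_square_norm)
    have "isCont c 0" using cd has_derivative_continuous by blast
    then have l1: "(c \<longlongrightarrow> c 0) (at 0)" by (simp add: isCont_def)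
    have ev: "eventually (\<lambda>y. c y = 1 - \<bar>y\<bar>) (at 0)"
      using V(1,2) cy by (auto simp: eventually_at_topological)
    have "((\<lambda>y::real. 1 - \<bar>y\<bar>) \<longlongrightarrow> 1 - \<bar>0\<bar>) (at 0)"
      by (intro tendsto_intros)
    then have l2: "(c \<longlongrightarrow> 1) (at 0)" using ev by (simp add: tendsto_cong)
    have c0: "c 0 = 1" using LIM_unique[OF l1 l2] .
    have call: "c y = 1 - \<bar>y\<bar>" if "y \<in> V" for y
      using cy[OF that] c0 by (cases "y = 0") auto
    have "(c has_field_derivative (Q' 1 \<bullet> e)) (at 0)"
    proof -
      have lin: "linear Q'" using Q' has_derivative_linear by blast
      have sc: "Q' s \<bullet> e = (Q' 1 \<bullet> e) * s" for s
      proof -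
        have "Q' s = s *\<^sub>R Q' 1" using linear_scale[OF lin, of s 1] by simp
        then show ?thesis by simp
      qed
      have "(\<lambda>s. Q' s \<bullet> e) = (\<lambda>s. (Q' 1 \<bullet> e) * s)" by (rule ext) (rule sc)
      then show ?thesis using cd unfolding has_field_derivative_def by simp
    qed
    then have "((\<lambda>y::real. 1 - \<bar>y\<bar>) has_field_derivative (Q' 1 \<bullet> e)) (at 0)"
      by (rule has_field_derivative_transform_within_open[OF _ V(1) V(2)]) (simp add: call)
    then show False using abs_not_deriv by blast
  qed
  show ?thesis
    by (rule exI[of _ f], intro conjI A C allI impI B)
qed

end
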